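(* Let $(R,\mathfrak{m},k)$ be a Noetherian local ring. Suppose that for every finitely generated torsion-less $R$-module $M$, freeness of $M^\ast=\operatorname{Hom}_R(M,R)$ implies freeness of $M$. Then $\operatorname{depth}(R)<2$.
   Context: A module $M$ is torsion-less if the natural map $M\to M^{\ast\ast}$ is injective. *)

theory Defs
  imports "HOL-Algebra.Algebra" "HOL-Library.Extended_Nat"
begin

definition is_lin_comb :: "('a, 'c) ring_scheme \<Rightarrow> ('a, 'b, 'd) module_scheme \<Rightarrow> 'b set \<Rightarrow> 'b \<Rightarrow> bool" where
  "is_lin_comb R M S x \<longleftrightarrow>
     (\<exists>F c. finite F \<and> F \<subseteq> S \<and> c \<in> F \<rightarrow> carrier R \<and>
            x = finsum M (\<lambda>v. smult M (c v) v) F)"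

definition spans :: "('a, 'c) ring_scheme \<Rightarrow> ('a, 'b, 'd) module_scheme \<Rightarrow> 'b set \<Rightarrow> bool" where
  "spans R M S \<longleftrightarrow> S \<subseteq> carrier M \<and> (\<forall>x \<in> carrier M. is_lin_comb R M S x)"

definition lin_indep :: "('a, 'c) ring_scheme \<Rightarrow> ('a, 'b, 'd) module_scheme \<Rightarrow> 'b set \<Rightarrow> bool" where
  "lin_indep R M S \<longleftrightarrow>
     (\<forall>F c. finite F \<and> F \<subseteq> S \<and> c \<in> F \<rightarrow> carrier R \<and>
            finsum M (\<lambda>v. smult M (c v) v) F = \<zero>\<^bsub>M\<^esub> \<longrightarrow> (\<forall>v \<in> F. c v = \<zero>\<^bsub>R\<^esub>))"

definition free_module :: "('a, 'c) ring_scheme \<Rightarrow> ('a, 'b, 'd) module_scheme \<Rightarrow> bool" where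
  "free_module R M \<longleftrightarrow> (\<exists>B. B \<subseteq> carrier M \<and> spans R M B \<and> lin_indep R M B)"

definition fin_gen :: "('a, 'c) ring_scheme \<Rightarrow> ('a, 'b, 'd) module_scheme \<Rightarrow> bool" where
  "fin_gen R M \<longleftrightarrow> (\<exists>S. finite S \<and> spans R M S)"

definition self_module :: "('a, 'c) ring_scheme \<Rightarrow> ('a, 'a) module" where
  "self_module R = \<lparr>carrier = carrier R, monoid.mult = monoid.mult R, one = \<one>\<^bsub>R\<^esub>,
     ring.zero = \<zero>\<^bsub>R\<^esub>, ring.add = add R, module.smult = monoid.mult R\<rparr>"

definition mod_hom :: "('a, 'c) ring_scheme \<Rightarrow> ('a, 'b, 'd) module_scheme \<Rightarrow> ('a, 'e, 'f) module_scheme \<Rightarrow> ('b \<Rightarrow> 'e) \<Rightarrow> bool" where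
  "mod_hom R M N f \<longleftrightarrow> f \<in> carrier M \<rightarrow> carrier N \<and>
     (\<forall>x \<in> carrier M. \<forall>y \<in> carrier M. f (x \<oplus>\<^bsub>M\<^esub> y) = f x \<oplus>\<^bsub>N\<^esub> f y) \<and>
     (\<forall>a \<in> carrier R. \<forall>x \<in> carrier M. f (smult M a x) = smult N a (f x))"

text \<open>The dual module M* = Hom_R(M,R), with pointwise operations (maps extensional on carrier M).
  The ring multiplication/one fields of the record are irrelevant for the module structure.\<close>
definition dual_module :: "('a, 'c) ring_scheme \<Rightarrow> ('a, 'b, 'd) module_scheme \<Rightarrow> ('a, 'b \<Rightarrow> 'a) module" where
  "dual_module R M = \<lparr>carrier = {f. mod_hom R M (self_module R) f \<and> f \<in> extensional (carrier M)},
     monoid.mult = (\<lambda>f g. \<lambda>x \<in> carrier M. f x \<otimes>\<^bsub>R\<^esub> g x),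
     one = (\<lambda>x \<in> carrier M. \<one>\<^bsub>R\<^esub>),
     ring.zero = (\<lambda>x \<in> carrier M. \<zero>\<^bsub>R\<^esub>),
     ring.add = (\<lambda>f g. \<lambda>x \<in> carrier M. f x \<oplus>\<^bsub>R\<^esub> g x),
     module.smult = (\<lambda>a f. \<lambda>x \<in> carrier M. a \<otimes>\<^bsub>R\<^esub> f x)\<rparr>"

definition double_dual_map :: "('a, 'c) ring_scheme \<Rightarrow> ('a, 'b, 'd) module_scheme \<Rightarrow> 'b \<Rightarrow> (('b \<Rightarrow> 'a) \<Rightarrow> 'a)" where
  "double_dual_map R M = (\<lambda>x \<in> carrier M. \<lambda>f \<in> carrier (dual_module R M). f x)"

definition torsionless :: "('a, 'c) ring_scheme \<Rightarrow> ('a, 'b, 'd) module_scheme \<Rightarrow> bool" where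
  "torsionless R M \<longleftrightarrow> inj_on (double_dual_map R M) (carrier M)"

definition regular_seq :: "('a, 'c) ring_scheme \<Rightarrow> 'a set \<Rightarrow> 'a list \<Rightarrow> bool" where
  "regular_seq R m xs \<longleftrightarrow> set xs \<subseteq> m \<and> genideal R (set xs) \<noteq> carrier R \<and>
     (\<forall>i < length xs. \<forall>y \<in> carrier R.
        xs ! i \<otimes>\<^bsub>R\<^esub> y \<in> genideal R (set (take i xs)) \<longrightarrow> y \<in> genideal R (set (take i xs)))"

definition depth :: "('a, 'c) ring_scheme \<Rightarrow> 'a set \<Rightarrow> enat" where
  "depth R m = Sup {enat (length xs) | xs. regular_seq R m xs}"

end

theory Submission
  imports Defs
begin


lemma self_module_simps[simp]:
  "carrier (self_module R) = carrier R" "add (self_module R) = add R"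
  "ring.zero (self_module R) = ring.zero R" "smult (self_module R) = monoid.mult R"
  by (simp_all add: self_module_def)

lemma dual_module_simps[simp]:
  "carrier (dual_module R M) = {f. mod_hom R M (self_module R) f \<and> f \<in> extensional (carrier M)}"
  "add (dual_module R M) = (\<lambda>f g. \<lambda>x \<in> carrier M. f x \<oplus>\<^bsub>R\<^esub> g x)"
  "ring.zero (dual_module R M) = (\<lambda>x \<in> carrier M. \<zero>\<^bsub>R\<^esub>)"
  "smult (dual_module R M) = (\<lambda>a f. \<lambda>x \<in> carrier M. a \<otimes>\<^bsub>R\<^esub> f x)"
  by (simp_all add: dual_module_def)

lemma dual_is_module:
  fixes R (structure)
  assumes M: "module R M"
  shows "module R (dual_module R M)"
proof -
  interpret module R M by (rule M)
  let ?D = "dual_module R M"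
  have hom: "f x \<in> carrier R" if "mod_hom R M (self_module R) f" "x \<in> carrier M" for f x
    using that by (auto simp: mod_hom_def)
  have homa: "f (x \<oplus>\<^bsub>M\<^esub> y) = f x \<oplus> f y" if "mod_hom R M (self_module R) f" "x \<in> carrier M" "y \<in> carrier M" for f x y
    using that by (auto simp: mod_hom_def)
  have homs: "f (a \<odot>\<^bsub>M\<^esub> y) = a \<otimes> f y" if "mod_hom R M (self_module R) f" "a \<in> carrier R" "y \<in> carrier M" for f a y
    using that by (auto simp: mod_hom_def)
  have eqD: "f = g" if "f \<in> carrier ?D" "g \<in> carrier ?D" "\<And>x. x \<in> carrier M \<Longrightarrow> f x = g x" for f g
    using that by (simp add: extensional_def) (metis ext)
  have addc: "f \<oplus>\<^bsub>?D\<^esub> g \<in> carrier ?D" if "f \<in> carrier ?D" "g \<in> carrier ?D" for f g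
  proof -
    have f: "mod_hom R M (self_module R) f" and g: "mod_hom R M (self_module R) g" using that by auto
    have 1: "(f (x \<oplus>\<^bsub>M\<^esub> y) \<oplus> g (x \<oplus>\<^bsub>M\<^esub> y)) = (f x \<oplus> g x) \<oplus> (f y \<oplus> g y)"
      if "x \<in> carrier M" "y \<in> carrier M" for x y
      using that f g hom[OF f] hom[OF g] homa[OF f] homa[OF g] by (simp add: R.a_ac)
    have 2: "f (a \<odot>\<^bsub>M\<^esub> y) \<oplus> g (a \<odot>\<^bsub>M\<^esub> y) = a \<otimes> (f y \<oplus> g y)"
      if "a \<in> carrier R" "y \<in> carrier M" for a y
      using that f g hom[OF f] hom[OF g] homs[OF f] homs[OF g] by (simp add: r_distr)
    show ?thesis using 1 2 hom[OF f] hom[OF g] by (auto simp: mod_hom_def)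
  qed
  have zc: "\<zero>\<^bsub>?D\<^esub> \<in> carrier ?D"
    by (auto simp: mod_hom_def)
  have smc: "a \<odot>\<^bsub>?D\<^esub> f \<in> carrier ?D" if "a \<in> carrier R" "f \<in> carrier ?D" for a f
  proof -
    have f: "mod_hom R M (self_module R) f" using that by auto
    have 1: "a \<otimes> f (x \<oplus>\<^bsub>M\<^esub> y) = a \<otimes> f x \<oplus> a \<otimes> f y"
      if "x \<in> carrier M" "y \<in> carrier M" for x y
      using that \<open>a \<in> carrier R\<close> hom[OF f] homa[OF f] by (simp add: r_distr)
    have 2: "a \<otimes> f (b \<odot>\<^bsub>M\<^esub> y) = b \<otimes> (a \<otimes> f y)"
      if "b \<in> carrier R" "y \<in> carrier M" for b y
      using that \<open>a \<in> carrier R\<close> hom[OF f] homs[OF f] by (simp add: m_lcomm)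
    show ?thesis using 1 2 hom[OF f] \<open>a \<in> carrier R\<close> by (auto simp: mod_hom_def)
  qed
  have negc: "(\<lambda>x\<in>carrier M. \<ominus> f x) \<in> carrier ?D" if "f \<in> carrier ?D" for f
  proof -
    have f: "mod_hom R M (self_module R) f" using that by auto
    have 1: "\<ominus> f (x \<oplus>\<^bsub>M\<^esub> y) = \<ominus> f x \<oplus> \<ominus> f y"
      if "x \<in> carrier M" "y \<in> carrier M" for x y
      using that hom[OF f] homa[OF f] by (simp add: R.minus_add)
    have 2: "\<ominus> f (b \<odot>\<^bsub>M\<^esub> y) = b \<otimes> (\<ominus> f y)"
      if "b \<in> carrier R" "y \<in> carrier M" for b y
      using that hom[OF f] homs[OF f] by (simp add: r_minus)
    show ?thesis using 1 2 hom[OF f] by (auto simp: mod_hom_def)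
  qed
  show ?thesis
  proof (rule moduleI)
    show "cring R" by (rule is_cring)
    show "abelian_group ?D"
    proof (rule abelian_groupI)
      show "\<And>x y. x \<in> carrier ?D \<Longrightarrow> y \<in> carrier ?D \<Longrightarrow> x \<oplus>\<^bsub>?D\<^esub> y \<in> carrier ?D" by (rule addc)
      show "\<zero>\<^bsub>?D\<^esub> \<in> carrier ?D" by (rule zc)
      show "(x \<oplus>\<^bsub>?D\<^esub> y) \<oplus>\<^bsub>?D\<^esub> z = x \<oplus>\<^bsub>?D\<^esub> (y \<oplus>\<^bsub>?D\<^esub> z)"
        if "x \<in> carrier ?D" "y \<in> carrier ?D" "z \<in> carrier ?D" for x y z
        using that by (intro eqD addc) (auto simp: hom R.a_assoc)
      show "x \<oplus>\<^bsub>?D\<^esub> y = y \<oplus>\<^bsub>?D\<^esub> x" if "x \<in> carrier ?D" "y \<in> carrier ?D" for x y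
        using that by (intro eqD addc) (auto simp: hom R.a_comm)
      show "\<zero>\<^bsub>?D\<^esub> \<oplus>\<^bsub>?D\<^esub> x = x" if "x \<in> carrier ?D" for x
        using that by (intro eqD addc zc) (auto simp: hom)
      show "\<exists>y\<in>carrier ?D. y \<oplus>\<^bsub>?D\<^esub> x = \<zero>\<^bsub>?D\<^esub>" if "x \<in> carrier ?D" for x
        using that negc[OF that] by (intro bexI[of _ "\<lambda>y\<in>carrier M. \<ominus> x y"] eqD addc zc) (auto simp: hom R.l_neg)
    qed
    show "\<And>a x. a \<in> carrier R \<Longrightarrow> x \<in> carrier ?D \<Longrightarrow> a \<odot>\<^bsub>?D\<^esub> x \<in> carrier ?D" by (rule smc)
    show "(a \<oplus> b) \<odot>\<^bsub>?D\<^esub> x = a \<odot>\<^bsub>?D\<^esub> x \<oplus>\<^bsub>?D\<^esub> b \<odot>\<^bsub>?D\<^esub> x"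
      if "a \<in> carrier R" "b \<in> carrier R" "x \<in> carrier ?D" for a b x
      using that by (intro eqD addc smc) (auto simp: hom l_distr)
    show "a \<odot>\<^bsub>?D\<^esub> (x \<oplus>\<^bsub>?D\<^esub> y) = a \<odot>\<^bsub>?D\<^esub> x \<oplus>\<^bsub>?D\<^esub> a \<odot>\<^bsub>?D\<^esub> y"
      if "a \<in> carrier R" "x \<in> carrier ?D" "y \<in> carrier ?D" for a x y
      using that by (intro eqD addc smc) (auto simp: hom r_distr)
    show "(a \<otimes> b) \<odot>\<^bsub>?D\<^esub> x = a \<odot>\<^bsub>?D\<^esub> (b \<odot>\<^bsub>?D\<^esub> x)"
      if "a \<in> carrier R" "b \<in> carrier R" "x \<in> carrier ?D" for a b x
      using that by (intro eqD smc) (auto simp: hom m_assoc)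
    show "\<one> \<odot>\<^bsub>?D\<^esub> x = x" if "x \<in> carrier ?D" for x
      using that by (intro eqD smc) (auto simp: hom)
  qed
qed


lemma fs1:
  assumes "abelian_monoid G" "f x \<in> carrier G"
  shows "finsum G f {x} = f x"
proof -
  interpret abelian_monoid G by fact
  show ?thesis using assms(2) by (simp add: finsum_insert)
qed

lemma fs2:
  assumes "abelian_monoid G" "x \<noteq> y" "f x \<in> carrier G" "f y \<in> carrier G"
  shows "finsum G f {x, y} = f x \<oplus>\<^bsub>G\<^esub> f y"
proof -
  interpret abelian_monoid G by fact
  show ?thesis using assms(2-) by (simp add: finsum_insert)
qed



lemma key:
  fixes R (structure) and a b :: 'a
  assumes cr: "cring R" and ab: "a \<in> carrier R" "b \<in> carrier R"
    and nzd: "\<forall>y\<in>carrier R. a \<otimes> y = \<zero> \<longrightarrow> y = \<zero>"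
    and reg: "\<forall>y\<in>carrier R. (\<exists>r\<in>carrier R. b \<otimes> y = r \<otimes> a) \<longrightarrow> (\<exists>r\<in>carrier R. y = r \<otimes> a)"
    and noone: "\<not> (\<exists>r\<in>carrier R. \<exists>s\<in>carrier R. r \<otimes> a \<oplus> s \<otimes> b = \<one>)"
    and hyp: "\<forall>M :: ('a, (nat \<Rightarrow> 'a) set) module.
           module R M \<and> fin_gen R M \<and> torsionless R M \<and> free_module R (dual_module R M)
           \<longrightarrow> free_module R M"
  shows False
proof -
  interpret cring R by (rule cr)
  have z0: "\<zero> \<otimes> a \<oplus> \<zero> \<otimes> b = \<zero>" using ab by simp
  have one_ne: "\<one> \<noteq> \<zero>"
    using noone z0 by force
  have a_ne: "a \<noteq> b"
  proof
    assume "a = b"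
    then have "b \<otimes> \<one> = \<one> \<otimes> a" using ab by simp
    then have "\<exists>r\<in>carrier R. \<one> = r \<otimes> a" using reg by blast
    then obtain r where r: "r \<in> carrier R" "\<one> = r \<otimes> a" by blast
    then have "r \<otimes> a \<oplus> \<zero> \<otimes> b = \<one>" using ab by simp
    then show False using noone r by blast
  qed
  define I where "I = {r \<otimes> a \<oplus> s \<otimes> b | r s. r \<in> carrier R \<and> s \<in> carrier R}"
  have Icarr: "I \<subseteq> carrier R" using ab by (auto simp: I_def)
  have aI: "a \<in> I" unfolding I_def using ab by (intro CollectI exI[of _ \<one>] exI[of _ \<zero>]) simp
  have bI: "b \<in> I" unfolding I_def using ab by (intro CollectI exI[of _ \<zero>] exI[of _ \<one>]) simp
  have zI: "\<zero> \<in> I" unfolding I_def using ab by (intro CollectI exI[of _ \<zero>] exI[of _ \<zero>]) simp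
  have addI: "x \<oplus> y \<in> I" if xI: "x \<in> I" and yI: "y \<in> I" for x y
  proof -
    obtain r s where x: "x = r \<otimes> a \<oplus> s \<otimes> b" "r \<in> carrier R" "s \<in> carrier R" using xI by (auto simp: I_def)
    obtain r' s' where y: "y = r' \<otimes> a \<oplus> s' \<otimes> b" "r' \<in> carrier R" "s' \<in> carrier R" using yI by (auto simp: I_def)
    have "x \<oplus> y = (r \<oplus> r') \<otimes> a \<oplus> (s \<oplus> s') \<otimes> b" using x y ab by (simp add: l_distr a_ac)
    then show ?thesis using x y unfolding I_def by blast
  qed
  have smI: "c \<otimes> x \<in> I" if cC: "c \<in> carrier R" and xI: "x \<in> I" for c x
  proof -
    obtain r s where x: "x = r \<otimes> a \<oplus> s \<otimes> b" "r \<in> carrier R" "s \<in> carrier R" using xI by (auto simp: I_def)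
    have "c \<otimes> x = (c \<otimes> r) \<otimes> a \<oplus> (c \<otimes> s) \<otimes> b" using x ab cC by (simp add: r_distr m_assoc)
    then show ?thesis using x cC unfolding I_def by blast
  qed
  have negI: "\<ominus> x \<in> I" if "x \<in> I" for x
  proof -
    have "\<ominus> x = (\<ominus> \<one>) \<otimes> x" using that Icarr by (simp add: l_minus subsetD)
    then show ?thesis using smI that by simp
  qed
  define emb :: "'a \<Rightarrow> (nat \<Rightarrow> 'a) set" where "emb x = {\<lambda>_. x}" for x
  define dec :: "(nat \<Rightarrow> 'a) set \<Rightarrow> 'a" where "dec U = (SOME f. f \<in> U) 0" for U
  have dec_emb[simp]: "dec (emb x) = x" for x by (simp add: emb_def dec_def)
  have emb_inj[simp]: "emb x = emb y \<longleftrightarrow> x = y" for x y by (metis dec_emb)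
  define M :: "('a, (nat \<Rightarrow> 'a) set) module" where
    "M = \<lparr>carrier = emb ` I, monoid.mult = (\<lambda>U V. U), one = emb \<one>, ring.zero = emb \<zero>,
          ring.add = (\<lambda>U V. emb (dec U \<oplus> dec V)), module.smult = (\<lambda>r U. emb (r \<otimes> dec U))\<rparr>"
  have Mc: "carrier M = emb ` I" and Ma: "U \<oplus>\<^bsub>M\<^esub> V = emb (dec U \<oplus> dec V)" and Mz: "\<zero>\<^bsub>M\<^esub> = emb \<zero>"
    and Ms: "r \<odot>\<^bsub>M\<^esub> U = emb (r \<otimes> dec U)" for U V r
    by (simp_all add: M_def)
  have Mmem: "U \<in> carrier M \<longleftrightarrow> (\<exists>x\<in>I. U = emb x)" for U by (auto simp: Mc)
  have decI: "U \<in> carrier M \<Longrightarrow> dec U \<in> I" for U by (auto simp: Mc)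
  have decC: "U \<in> carrier M \<Longrightarrow> dec U \<in> carrier R" for U using decI Icarr by blast
  have embdec: "U \<in> carrier M \<Longrightarrow> emb (dec U) = U" for U by (auto simp: Mc)
  have modM: "module R M"
  proof (rule moduleI)
    show "cring R" by (rule cr)
    show "abelian_group M"
    proof (rule abelian_groupI)
      show "x \<oplus>\<^bsub>M\<^esub> y \<in> carrier M" if "x \<in> carrier M" "y \<in> carrier M" for x y
        using that by (auto simp: Mc Ma addI)
      show "\<zero>\<^bsub>M\<^esub> \<in> carrier M" by (simp add: Mc Mz zI)
      show "(x \<oplus>\<^bsub>M\<^esub> y) \<oplus>\<^bsub>M\<^esub> z = x \<oplus>\<^bsub>M\<^esub> (y \<oplus>\<^bsub>M\<^esub> z)"
        if "x \<in> carrier M" "y \<in> carrier M" "z \<in> carrier M" for x y z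
        using that decC by (simp add: Ma a_assoc)
      show "x \<oplus>\<^bsub>M\<^esub> y = y \<oplus>\<^bsub>M\<^esub> x" if "x \<in> carrier M" "y \<in> carrier M" for x y
        using that decC by (simp add: Ma a_comm)
      show "\<zero>\<^bsub>M\<^esub> \<oplus>\<^bsub>M\<^esub> x = x" if "x \<in> carrier M" for x
        using that decC embdec by (simp add: Ma Mz)
      show "\<exists>y\<in>carrier M. y \<oplus>\<^bsub>M\<^esub> x = \<zero>\<^bsub>M\<^esub>" if "x \<in> carrier M" for x
        using that decC decI negI
        by (intro bexI[of _ "emb (\<ominus> dec x)"]) (auto simp: Ma Mz Mc l_neg)
    qed
    show "a' \<odot>\<^bsub>M\<^esub> x \<in> carrier M" if "a' \<in> carrier R" "x \<in> carrier M" for a' x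
      using that decI smI by (auto simp: Ms Mc)
    show "(a' \<oplus> b') \<odot>\<^bsub>M\<^esub> x = a' \<odot>\<^bsub>M\<^esub> x \<oplus>\<^bsub>M\<^esub> b' \<odot>\<^bsub>M\<^esub> x"
      if "a' \<in> carrier R" "b' \<in> carrier R" "x \<in> carrier M" for a' b' x
      using that decC by (simp add: Ms Ma l_distr)
    show "a' \<odot>\<^bsub>M\<^esub> (x \<oplus>\<^bsub>M\<^esub> y) = a' \<odot>\<^bsub>M\<^esub> x \<oplus>\<^bsub>M\<^esub> a' \<odot>\<^bsub>M\<^esub> y"
      if "a' \<in> carrier R" "x \<in> carrier M" "y \<in> carrier M" for a' x y
      using that decC by (simp add: Ms Ma r_distr)
    show "(a' \<otimes> b') \<odot>\<^bsub>M\<^esub> x = a' \<odot>\<^bsub>M\<^esub> (b' \<odot>\<^bsub>M\<^esub> x)"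
      if "a' \<in> carrier R" "b' \<in> carrier R" "x \<in> carrier M" for a' b' x
      using that decC by (simp add: Ms m_assoc)
    show "\<one> \<odot>\<^bsub>M\<^esub> x = x" if "x \<in> carrier M" for x
      using that decC embdec by (simp add: Ms)
  qed
  have amM: "abelian_monoid M" using modM by (simp add: module_def abelian_group_def)
  have Madd: "U \<oplus>\<^bsub>M\<^esub> V \<in> carrier M" if "U \<in> carrier M" "V \<in> carrier M" for U V
    using that abelian_monoid.a_closed[OF amM] by blast
  have Msm: "r \<odot>\<^bsub>M\<^esub> U \<in> carrier M" if "r \<in> carrier R" "U \<in> carrier M" for r U
    using that module.smult_closed[OF modM] by blast
  have canc: "x = y" if "a \<otimes> x = a \<otimes> y" "x \<in> carrier R" "y \<in> carrier R" for x y
  proof -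
    have "a \<otimes> (x \<ominus> y) = \<zero>" using that ab by algebra
    then have "x \<ominus> y = \<zero>" using nzd that by simp
    then have "x = x \<ominus> (x \<ominus> y)" using that by algebra
    also have "\<dots> = y" using that by algebra
    finally show ?thesis .
  qed
  have eaM: "emb a \<in> carrier M" and ebM: "emb b \<in> carrier M" using aI bI by (auto simp: Mc)
  have IM: "\<exists>r\<in>carrier R. \<exists>s\<in>carrier R. U = emb (r \<otimes> a \<oplus> s \<otimes> b)" if "U \<in> carrier M" for U
    using that by (auto simp: Mc I_def)
  have fgM: "fin_gen R M"
    unfolding fin_gen_def spans_def
  proof (intro exI[of _ "{emb a, emb b}"] conjI ballI)
    show "finite {emb a, emb b}" by simp
    show "{emb a, emb b} \<subseteq> carrier M" using eaM ebM by simp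
    fix U assume "U \<in> carrier M"
    then obtain r s where rs: "r \<in> carrier R" "s \<in> carrier R" "U = emb (r \<otimes> a \<oplus> s \<otimes> b)" using IM by blast
    let ?c = "\<lambda>v. if v = emb a then r else s"
    have ne: "emb a \<noteq> emb b" using a_ne by simp
    have "finsum M (\<lambda>v. ?c v \<odot>\<^bsub>M\<^esub> v) {emb a, emb b} = ?c (emb a) \<odot>\<^bsub>M\<^esub> emb a \<oplus>\<^bsub>M\<^esub> ?c (emb b) \<odot>\<^bsub>M\<^esub> emb b"
      by (rule fs2[OF amM ne]) (use rs eaM ebM Msm in auto)
    also have "\<dots> = U" using ne rs by (simp add: Ms Ma)
    finally show "is_lin_comb R M {emb a, emb b} U"
      unfolding is_lin_comb_def using rs
      by (intro exI[of _ "{emb a, emb b}"] exI[of _ ?c]) auto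
  qed
  define f0 where "f0 = (\<lambda>U\<in>carrier M. dec U)"
  let ?D = "dual_module R M"
  have modD: "module R ?D" by (rule dual_is_module[OF modM])
  have amD: "abelian_monoid ?D" using modD by (simp add: module_def abelian_group_def)
  have f0D: "f0 \<in> carrier ?D"
    using decC Madd Msm by (auto simp: f0_def mod_hom_def Ma Ms)
  have tlM: "torsionless R M"
    unfolding torsionless_def
  proof (rule inj_onI)
    fix U V assume UV: "U \<in> carrier M" "V \<in> carrier M" "double_dual_map R M U = double_dual_map R M V"
    then have "double_dual_map R M U f0 = double_dual_map R M V f0" by simp
    then have "dec U = dec V" using UV f0D by (simp add: double_dual_map_def f0_def)
    then show "U = V" using embdec UV by metis
  qed
  have homC: "f U \<in> carrier R" if "f \<in> carrier ?D" "U \<in> carrier M" for f U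
    using that by (auto simp: mod_hom_def)
  have homA: "f (U \<oplus>\<^bsub>M\<^esub> V) = f U \<oplus> f V" if "f \<in> carrier ?D" "U \<in> carrier M" "V \<in> carrier M" for f U V
    using that by (auto simp: mod_hom_def)
  have homS: "f (r \<odot>\<^bsub>M\<^esub> U) = r \<otimes> f U" if "f \<in> carrier ?D" "r \<in> carrier R" "U \<in> carrier M" for f U r
    using that by (auto simp: mod_hom_def)
  have extD: "f = g" if "f \<in> carrier ?D" "g \<in> carrier ?D" "\<And>U. U \<in> carrier M \<Longrightarrow> f U = g U" for f g
    using that by (simp add: extensional_def) (metis ext)
  have fD: "free_module R ?D"
    unfolding free_module_def spans_def lin_indep_def
  proof (intro exI[of _ "{f0}"] conjI allI impI ballI)
    show "{f0} \<subseteq> carrier ?D" using f0D by simp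
    show "{f0} \<subseteq> carrier ?D" using f0D by simp
    fix f assume fD: "f \<in> carrier ?D"
    define u where "u = f (emb a)"
    define v where "v = f (emb b)"
    have uv: "u \<in> carrier R" "v \<in> carrier R" using homC fD eaM ebM by (auto simp: u_def v_def)
    have "b \<odot>\<^bsub>M\<^esub> emb a = a \<odot>\<^bsub>M\<^esub> emb b" using ab by (simp add: Ms m_comm)
    then have "b \<otimes> u = a \<otimes> v" using homS[OF fD ab(2) eaM] homS[OF fD ab(1) ebM] ab
      by (simp add: u_def v_def)
    then have buv: "b \<otimes> u = v \<otimes> a" using ab uv by (simp add: m_comm)
    then obtain r where r: "r \<in> carrier R" "u = r \<otimes> a" using reg uv by blast
    have "a \<otimes> v = a \<otimes> (r \<otimes> b)" using buv r ab uv by (simp add: m_ac)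
    then have vr: "v = r \<otimes> b" using canc uv r ab by simp
    have feq: "f = r \<odot>\<^bsub>?D\<^esub> f0"
    proof (rule extD[OF fD])
      show "r \<odot>\<^bsub>?D\<^esub> f0 \<in> carrier ?D" using module.smult_closed[OF modD r(1) f0D] .
      fix U assume U: "U \<in> carrier M"
      then obtain p q where pq: "p \<in> carrier R" "q \<in> carrier R" "U = emb (p \<otimes> a \<oplus> q \<otimes> b)" using IM by blast
      have "U = p \<odot>\<^bsub>M\<^esub> emb a \<oplus>\<^bsub>M\<^esub> q \<odot>\<^bsub>M\<^esub> emb b" using pq by (simp add: Ms Ma)
      then have "f U = p \<otimes> u \<oplus> q \<otimes> v"
        using homC[OF fD] homA[OF fD] homS[OF fD] Msm eaM ebM pq by (simp add: u_def v_def)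
      also have "\<dots> = r \<otimes> (p \<otimes> a \<oplus> q \<otimes> b)" using r vr pq ab by algebra
      also have "\<dots> = (r \<odot>\<^bsub>?D\<^esub> f0) U" using U pq by (simp add: f0_def)
      finally show "f U = (r \<odot>\<^bsub>?D\<^esub> f0) U" .
    qed
    have "finsum ?D (\<lambda>w. (\<lambda>_. r) w \<odot>\<^bsub>?D\<^esub> w) {f0} = r \<odot>\<^bsub>?D\<^esub> f0"
      by (rule fs1[OF amD]) (use module.smult_closed[OF modD r(1) f0D] in simp)
    then show "is_lin_comb R ?D {f0} f"
      unfolding is_lin_comb_def using r feq
      by (intro exI[of _ "{f0}"] exI[of _ "\<lambda>_. r"]) auto
  next
    fix F c w
    assume H: "finite F \<and> F \<subseteq> {f0} \<and> c \<in> F \<rightarrow> carrier R \<and> finsum ?D (\<lambda>v. c v \<odot>\<^bsub>?D\<^esub> v) F = \<zero>\<^bsub>?D\<^esub>"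
      and w: "w \<in> F"
    then have F: "F = {f0}" "w = f0" by auto
    have cC: "c f0 \<in> carrier R" using H F by auto
    have "finsum ?D (\<lambda>v. c v \<odot>\<^bsub>?D\<^esub> v) {f0} = c f0 \<odot>\<^bsub>?D\<^esub> f0"
      by (rule fs1[OF amD]) (use module.smult_closed[OF modD cC f0D] in simp)
    then have "c f0 \<odot>\<^bsub>?D\<^esub> f0 = \<zero>\<^bsub>?D\<^esub>" using H F by simp
    then have "(c f0 \<odot>\<^bsub>?D\<^esub> f0) (emb a) = \<zero>\<^bsub>?D\<^esub> (emb a)" by simp
    then have "c f0 \<otimes> a = \<zero>" using eaM by (simp add: f0_def)
    then have "a \<otimes> c f0 = \<zero>" using cC ab by (simp add: m_comm)
    then show "c w = \<zero>" using nzd cC F by simp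
  qed
  have nfM: "\<not> free_module R M"
  proof
    assume "free_module R M"
    then obtain B where B: "B \<subseteq> carrier M" "spans R M B" "lin_indep R M B"
      unfolding free_module_def by blast
    have b_nz: "b \<noteq> \<zero>"
    proof
      assume "b = \<zero>"
      then have "b \<otimes> \<one> = \<zero> \<otimes> a" using ab by simp
      then obtain r where r: "r \<in> carrier R" "\<one> = r \<otimes> a" using reg by blast
      then have "r \<otimes> a \<oplus> \<zero> \<otimes> b = \<one>" using ab by simp
      then show False using noone r by blast
    qed
    have a_nz: "a \<noteq> \<zero>"
    proof
      assume "a = \<zero>"
      then have "a \<otimes> \<one> = \<zero>" by simp
      then show False using nzd one_ne by simp
    qed
    have li: "c v = \<zero>" if "finite F" "F \<subseteq> B" "c \<in> F \<rightarrow> carrier R"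
      "finsum M (\<lambda>v. c v \<odot>\<^bsub>M\<^esub> v) F = \<zero>\<^bsub>M\<^esub>" "v \<in> F" for F c v
      using B(3) that unfolding lin_indep_def by blast
    have one: "B1 = B2" if "B1 \<in> B" "B2 \<in> B" for B1 B2
    proof (rule ccontr)
      assume ne: "B1 \<noteq> B2"
      have BM: "B1 \<in> carrier M" "B2 \<in> carrier M" using that B(1) by auto
      define d1 where "d1 = dec B1"
      define d2 where "d2 = dec B2"
      have d: "d1 \<in> carrier R" "d2 \<in> carrier R" using decC BM by (auto simp: d1_def d2_def)
      let ?c = "\<lambda>v. if v = B1 then d2 else \<ominus> d1"
      have "finsum M (\<lambda>v. ?c v \<odot>\<^bsub>M\<^esub> v) {B1, B2} = ?c B1 \<odot>\<^bsub>M\<^esub> B1 \<oplus>\<^bsub>M\<^esub> ?c B2 \<odot>\<^bsub>M\<^esub> B2"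
        by (rule fs2[OF amM ne]) (use d BM Msm in auto)
      also have "\<dots> = emb (d2 \<otimes> d1 \<oplus> (\<ominus> d1) \<otimes> d2)" using ne by (simp add: Ms Ma d1_def d2_def)
      also have "d2 \<otimes> d1 \<oplus> (\<ominus> d1) \<otimes> d2 = \<zero>" using d by algebra
      finally have "finsum M (\<lambda>v. ?c v \<odot>\<^bsub>M\<^esub> v) {B1, B2} = \<zero>\<^bsub>M\<^esub>" by (simp add: Mz)
      then have "?c B1 = \<zero>" by (rule li[rotated 3]) (use that d in auto)
      then have "d2 = \<zero>" by simp
      then have B2z: "B2 = emb \<zero>" using embdec BM by (metis d2_def)
      have "finsum M (\<lambda>v. (\<lambda>_. \<one>) v \<odot>\<^bsub>M\<^esub> v) {B2} = \<one> \<odot>\<^bsub>M\<^esub> B2"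
        by (rule fs1[OF amM]) (use BM Msm in simp)
      also have "\<dots> = \<zero>\<^bsub>M\<^esub>" using B2z by (simp add: Ms Mz)
      finally have "(\<lambda>_. \<one>) B2 = \<zero>" by (rule li[rotated 3]) (use that in auto)
      then show False using one_ne by simp
    qed
    have rep: "x = \<zero> \<or> (\<exists>B0\<in>B. \<exists>p\<in>carrier R. x = p \<otimes> dec B0)" if "x \<in> I" for x
    proof -
      have "emb x \<in> carrier M" using that by (simp add: Mc)
      then obtain F c where F: "finite F" "F \<subseteq> B" "c \<in> F \<rightarrow> carrier R"
        "emb x = finsum M (\<lambda>v. c v \<odot>\<^bsub>M\<^esub> v) F"
        using B(2) unfolding spans_def is_lin_comb_def by blast
      show ?thesis
      proof (cases "F = {}")
        case True
        then have "emb x = \<zero>\<^bsub>M\<^esub>" using F(4) abelian_monoid.finsum_empty[OF amM] by simp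
        then show ?thesis by (simp add: Mz)
      next
        case False
        then obtain B0 where B0: "B0 \<in> F" by blast
        then have FB0: "F = {B0}" using F(2) one by blast
        have B0M: "B0 \<in> carrier M" and B0B: "B0 \<in> B" using B0 F(2) B(1) by auto
        have cC: "c B0 \<in> carrier R" using F(3) B0 by auto
        have "finsum M (\<lambda>v. c v \<odot>\<^bsub>M\<^esub> v) {B0} = c B0 \<odot>\<^bsub>M\<^esub> B0"
          by (rule fs1[OF amM]) (use Msm cC B0M in simp)
        then have "emb x = emb (c B0 \<otimes> dec B0)" using F(4) FB0 by (simp add: Ms)
        then show ?thesis using B0B cC by auto
      qed
    qed
    obtain B0 p where p: "B0 \<in> B" "p \<in> carrier R" "a = p \<otimes> dec B0" using rep[OF aI] a_nz by blast
    obtain B1 q where q: "B1 \<in> B" "q \<in> carrier R" "b = q \<otimes> dec B1" using rep[OF bI] b_nz by blast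
    have "B1 = B0" using one p(1) q(1) by blast
    then have q': "b = q \<otimes> dec B0" using q(3) by simp
    have B0M: "B0 \<in> carrier M" using p(1) B(1) by auto
    obtain s t where st: "s \<in> carrier R" "t \<in> carrier R" "dec B0 = s \<otimes> a \<oplus> t \<otimes> b"
      using decI[OF B0M] unfolding I_def by blast
    have dC: "dec B0 \<in> carrier R" using decC B0M by simp
    have "b \<otimes> p = (q \<otimes> dec B0) \<otimes> p" by (simp only: q')
    also have "\<dots> = q \<otimes> (p \<otimes> dec B0)" using p(2) q(2) dC by (simp add: m_ac)
    also have "\<dots> = q \<otimes> a" by (simp only: p(3))
    finally have "b \<otimes> p = q \<otimes> a" .
    then obtain r where r: "r \<in> carrier R" "p = r \<otimes> a" using reg p(2) q(2) by blast
    have "a \<otimes> \<one> = a" using ab by simp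
    also have "\<dots> = p \<otimes> dec B0" by (rule p(3))
    also have "\<dots> = (r \<otimes> a) \<otimes> dec B0" by (simp only: r(2))
    also have "\<dots> = a \<otimes> (r \<otimes> dec B0)" using r(1) dC ab by (simp add: m_ac)
    finally have "a \<otimes> \<one> = a \<otimes> (r \<otimes> dec B0)" .
    then have "\<one> = r \<otimes> dec B0" by (rule canc) (use r dC in auto)
    also have "\<dots> = r \<otimes> (s \<otimes> a \<oplus> t \<otimes> b)" by (simp only: st(3))
    also have "\<dots> = (r \<otimes> s) \<otimes> a \<oplus> (r \<otimes> t) \<otimes> b" using st(1,2) r(1) ab by algebra
    finally have "(r \<otimes> s) \<otimes> a \<oplus> (r \<otimes> t) \<otimes> b = \<one>" by simp
    moreover have "r \<otimes> s \<in> carrier R" "r \<otimes> t \<in> carrier R" using r(1) st(1,2) by auto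
    ultimately show False using noone by blast
  qed
  show False using hyp modM fgM tlM fD nfM by blast
qed



lemma main_aux:
  fixes R :: "'a ring" (structure) and m :: "'a set"
  assumes "cring R" and "noetherian_ring R"
    and "maximalideal m R" and "\<forall>J. maximalideal J R \<longrightarrow> J = m"
    and "\<forall>M :: ('a, (nat \<Rightarrow> 'a) set) module.
           module R M \<and> fin_gen R M \<and> torsionless R M \<and> free_module R (dual_module R M)
           \<longrightarrow> free_module R M"
  shows "depth R m < 2"
proof (rule ccontr)
  interpret cring R by fact
  assume nd: "\<not> depth R m < 2"
  have mid: "ideal m R" using assms(3) by (rule maximalideal.axioms(1))
  have mc: "m \<subseteq> carrier R" using ideal.Icarr[OF mid] by blast
  have "\<exists>xs. regular_seq R m xs \<and> 2 \<le> length xs"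
  proof (rule ccontr)
    assume "\<not> (\<exists>xs. regular_seq R m xs \<and> 2 \<le> length xs)"
    then have "\<forall>y \<in> {enat (length xs) | xs. regular_seq R m xs}. y \<le> 1"
      by (auto simp: one_enat_def)
    then have "depth R m \<le> 1" unfolding depth_def by (intro Sup_least) blast
    then have "depth R m < 2"
      by (metis enat_ord_number(2) le_less_trans numeral_One one_less_numeral_iff semiring_norm(76))
    then show False using nd by simp
  qed
  then obtain xs where xs: "regular_seq R m xs" "2 \<le> length xs" by blast
  define a where "a = xs ! 0"
  define b where "b = xs ! 1"
  have sx: "set xs \<subseteq> carrier R" using xs(1) mc by (auto simp: regular_seq_def)
  have aset: "a \<in> set xs" and bset: "b \<in> set xs" using xs(2) unfolding a_def b_def by (auto intro!: nth_mem)
  have ab: "a \<in> carrier R" "b \<in> carrier R" using aset bset sx by auto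
  have t0: "take 0 xs = []" by simp
  have t1: "take 1 xs = [a]" using xs(2) unfolding a_def by (cases xs) auto
  have g0: "genideal R {} = {\<zero>}"
  proof
    show "genideal R {} \<subseteq> {\<zero>}" by (rule genideal_minimal[OF zeroideal]) simp
    have "ideal (genideal R {}) R" by (rule genideal_ideal) simp
    then show "{\<zero>} \<subseteq> genideal R {}"
      using additive_subgroup.zero_closed[OF ideal.axioms(1)] by blast
  qed
  have g1: "genideal R {a} = {x \<otimes> a | x. x \<in> carrier R}"
    using cgenideal_eq_genideal[OF ab(1)] by (simp add: cgenideal_def)
  have reg0: "\<forall>y\<in>carrier R. a \<otimes> y \<in> genideal R {} \<longrightarrow> y \<in> genideal R {}"
    using xs(1) xs(2) unfolding regular_seq_def
    by (metis t0 a_def empty_set zero_less_numeral order_less_le_trans)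
  have reg1: "\<forall>y\<in>carrier R. b \<otimes> y \<in> genideal R {a} \<longrightarrow> y \<in> genideal R {a}"
  proof -
    have "1 < length xs" using xs(2) by simp
    then show ?thesis using xs(1) t1 unfolding regular_seq_def b_def by (metis list.set(1) list.set(2))
  qed
  have nzd: "\<forall>y\<in>carrier R. a \<otimes> y = \<zero> \<longrightarrow> y = \<zero>" using reg0 g0 by simp
  have reg: "\<forall>y\<in>carrier R. (\<exists>r\<in>carrier R. b \<otimes> y = r \<otimes> a) \<longrightarrow> (\<exists>r\<in>carrier R. y = r \<otimes> a)"
    using reg1 g1 by blast
  have noone: "\<not> (\<exists>r\<in>carrier R. \<exists>s\<in>carrier R. r \<otimes> a \<oplus> s \<otimes> b = \<one>)"
  proof
    assume "\<exists>r\<in>carrier R. \<exists>s\<in>carrier R. r \<otimes> a \<oplus> s \<otimes> b = \<one>"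
    then obtain r s where rs: "r \<in> carrier R" "s \<in> carrier R" "r \<otimes> a \<oplus> s \<otimes> b = \<one>" by blast
    have I: "ideal (genideal R (set xs)) R" by (rule genideal_ideal[OF sx])
    have "a \<in> genideal R (set xs)" "b \<in> genideal R (set xs)" using genideal_self[OF sx] aset bset by auto
    then have "r \<otimes> a \<in> genideal R (set xs)" "s \<otimes> b \<in> genideal R (set xs)"
      using ideal.I_l_closed[OF I] rs by auto
    then have "\<one> \<in> genideal R (set xs)"
      using additive_subgroup.a_closed[OF ideal.axioms(1)[OF I]] rs(3) by metis
    then have "genideal R (set xs) = carrier R" by (rule ideal.one_imp_carrier[OF I])
    then show False using xs(1) by (simp add: regular_seq_def)
  qed
  show False by (rule key[OF assms(1) ab nzd reg noone assms(5)])
qed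

theorem proposition4p20:
  fixes R :: "'a ring" and m :: "'a set"
  assumes "cring R" and "noetherian_ring R"
    and "maximalideal m R" and "\<forall>J. maximalideal J R \<longrightarrow> J = m"
    and "\<forall>M :: ('a, (nat \<Rightarrow> 'a) set) module.
           module R M \<and> fin_gen R M \<and> torsionless R M \<and> free_module R (dual_module R M)
           \<longrightarrow> free_module R M"
  shows "depth R m < 2"
  by (rule main_aux[OF assms])

end
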